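(* Let $I\subseteq\mathbb{R}$ be an interval, $p\in\mathbb{N}$, $\mathbf{d}=(d_1,\dots,d_p)\in\mathbb{N}^p$, $\alpha\in\mathbb{N}_p^{\mathbf{d}}$, and let $\mathbf{M}=(M_1,\dots,M_p)$ be a $\mathbf{d}$-averaging mapping on $I$ such that every $M_i$ is continuous and strict. Then there exists a unique $\mathbf{M}_\alpha$-invariant mean $K\colon I^p\to I$ if and only if the root graph $\mathcal{R}(G_\alpha)$ is ergodic.
   Context: A $k$-variable mean on an interval $I$ is a function $M\colon I^k\to I$ with $\min(x)\le M(x)\le\max(x)$ for all $x\in I^k$; it is strict if both inequalities are strict for every nonconstant $x$. A function $K\colon I^p\to I$ is $\mathbf{F}$-invariant for a map $\mathbf{F}\colon I^p\to I^p$ if $K\circ\mathbf{F}=K$. Notation: $\mathbb{N}_p=\{1,\dots,p\}$, $\mathbb{N}_p^{\mathbf{d}}=\mathbb{N}_p^{d_1}\times\dots\times\mathbb{N}_p^{d_p}$. A $\mathbf{d}$-averaging mapping on $I$ is a sequence $(M_1,\dots,M_p)$ where each $M_i$ is a $d_i$-variable mean on $I$. For $\alpha=(\alpha_1,\dots,\alpha_p)\in\mathbb{N}_p^{\mathbf{d}}$, $\alpha_i=(\alpha_{i,1},\dots,\alpha_{i,d_i})$, define $\mathbf{M}_\alpha\colon I^p\to I^p$ by $\mathbf{M}_\alpha(x)=\big(M_i(x_{\alpha_{i,1}},\dots,x_{\alpha_{i,d_i}})\big)_{i=1}^p$. The $\alpha$-incidence graph is $G_\alpha=(\mathbb{N}_p,E_\alpha)$,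 $E_\alpha=\{(\alpha_{i,j},i): i\in\mathbb{N}_p, j\in\mathbb{N}_{d_i}\}$. A digraph is ergodic if it is nonempty, irreducible (walks exist between any two vertices) and aperiodic (no integer $k>1$ divides the length of every cycle). The root $R(G)$ of a digraph $G$ is the union of the strongly connected components (classes of mutual reachability) that receive no edge from a vertex of another component; the root graph $\mathcal{R}(G)$ is the subgraph of $G$ induced by $R(G)$. *)

theory Defs
  imports "HOL-Analysis.Analysis"
begin

text \<open>Points of I^k are extensional functions on the index set {..<k}
  (indices are 0-based: index i here corresponds to i+1 in the paper).\<close>

abbreviation cube :: "real set \<Rightarrow> nat \<Rightarrow> (nat \<Rightarrow> real) set" where
  "cube I k \<equiv> PiE {..<k} (\<lambda>_. I)"

definition is_mean :: "real set \<Rightarrow> nat \<Rightarrow> ((nat \<Rightarrow> real) \<Rightarrow> real) \<Rightarrow> bool" where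
  "is_mean I k M \<longleftrightarrow> (\<forall>x\<in>cube I k.
      Min (x ` {..<k}) \<le> M x \<and> M x \<le> Max (x ` {..<k}))"

definition strict_mean :: "real set \<Rightarrow> nat \<Rightarrow> ((nat \<Rightarrow> real) \<Rightarrow> real) \<Rightarrow> bool" where
  "strict_mean I k M \<longleftrightarrow> is_mean I k M \<and> (\<forall>x\<in>cube I k.
      (\<exists>i<k. \<exists>j<k. x i \<noteq> x j) \<longrightarrow>
        Min (x ` {..<k}) < M x \<and> M x < Max (x ` {..<k}))"

definition M_alpha ::
  "nat \<Rightarrow> (nat \<Rightarrow> nat) \<Rightarrow> (nat \<Rightarrow> nat \<Rightarrow> nat) \<Rightarrow> (nat \<Rightarrow> (nat \<Rightarrow> real) \<Rightarrow> real)
     \<Rightarrow> (nat \<Rightarrow> real) \<Rightarrow> (nat \<Rightarrow> real)" where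
  "M_alpha p d \<alpha> M x =
     restrict (\<lambda>i. M i (restrict (\<lambda>j. x (\<alpha> i j)) {..<d i})) {..<p}"

definition invariant_mean ::
  "real set \<Rightarrow> nat \<Rightarrow> ((nat \<Rightarrow> real) \<Rightarrow> (nat \<Rightarrow> real)) \<Rightarrow> ((nat \<Rightarrow> real) \<Rightarrow> real) \<Rightarrow> bool" where
  "invariant_mean I p F K \<longleftrightarrow> is_mean I p K \<and> (\<forall>x\<in>cube I p. K (F x) = K x)"

definition inc_edges :: "nat \<Rightarrow> (nat \<Rightarrow> nat) \<Rightarrow> (nat \<Rightarrow> nat \<Rightarrow> nat) \<Rightarrow> (nat \<times> nat) set" where
  "inc_edges p d \<alpha> = {(\<alpha> i j, i) | i j. i < p \<and> j < d i}"

definition scc :: "(nat \<times> nat) set \<Rightarrow> nat \<Rightarrow> nat set" where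
  "scc E v = {w. (v, w) \<in> E\<^sup>* \<and> (w, v) \<in> E\<^sup>*}"

definition root_set :: "nat set \<Rightarrow> (nat \<times> nat) set \<Rightarrow> nat set" where
  "root_set V E = \<Union> {scc E v | v. v \<in> V \<and>
        (\<forall>(u, w)\<in>E. w \<in> scc E v \<longrightarrow> u \<in> scc E v)}"

definition irreducible_graph :: "nat set \<Rightarrow> (nat \<times> nat) set \<Rightarrow> bool" where
  "irreducible_graph V E \<longleftrightarrow> (\<forall>u\<in>V. \<forall>v\<in>V. (u, v) \<in> E\<^sup>*)"

text \<open>Cycles are taken as closed walks of positive length.\<close>
definition aperiodic_graph :: "nat set \<Rightarrow> (nat \<times> nat) set \<Rightarrow> bool" where
  "aperiodic_graph V E \<longleftrightarrow>
     \<not> (\<exists>k::nat. k > 1 \<and> (\<forall>v\<in>V. \<forall>n>0. (v, v) \<in> E ^^ n \<longrightarrow> k dvd n))"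

definition ergodic_graph :: "nat set \<Rightarrow> (nat \<times> nat) set \<Rightarrow> bool" where
  "ergodic_graph V E \<longleftrightarrow> V \<noteq> {} \<and> irreducible_graph V E \<and> aperiodic_graph V E"

end

theory Submission
  imports Defs
begin

lemma tendsto_fun_iff:
  fixes f :: "'b \<Rightarrow> 'a \<Rightarrow> 'c::topological_space"
  shows "(f \<longlongrightarrow> l) F \<longleftrightarrow> (\<forall>i. ((\<lambda>c. f c i) \<longlongrightarrow> l i) F)"
proof -
  have "(f \<longlongrightarrow> l) F \<longleftrightarrow> limitin (product_topology (\<lambda>i. euclidean) UNIV) f l F"
    by (simp add: euclidean_product_topology)
  also have "\<dots> \<longleftrightarrow> (\<forall>i. ((\<lambda>c. f c i) \<longlongrightarrow> l i) F)"
    by (simp add: limitin_componentwise)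
  finally show ?thesis .
qed

locale setting =
  fixes I :: "real set" and p :: nat and d :: "nat \<Rightarrow> nat"
    and \<alpha> :: "nat \<Rightarrow> nat \<Rightarrow> nat" and M :: "nat \<Rightarrow> (nat \<Rightarrow> real) \<Rightarrow> real"
  assumes I: "is_interval I" and I_nondeg: "\<exists>a\<in>I. \<exists>b\<in>I. a < b"
    and p: "p \<ge> 1"
    and d: "\<forall>i<p. d i \<ge> 1"
    and \<alpha>: "\<forall>i<p. \<forall>j<d i. \<alpha> i j < p"
    and M_strict: "\<forall>i<p. strict_mean I (d i) (M i)"
    and M_cont: "\<forall>i<p. continuous_on (cube I (d i)) (M i)"
begin

abbreviation "F \<equiv> M_alpha p d \<alpha> M"
abbreviation "E \<equiv> inc_edges p d \<alpha>"

definition arg :: "(nat \<Rightarrow> real) \<Rightarrow> nat \<Rightarrow> nat \<Rightarrow> real" where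
  "arg y i = restrict (\<lambda>j. y (\<alpha> i j)) {..<d i}"

lemma arg_cube: "y \<in> cube I p \<Longrightarrow> i < p \<Longrightarrow> arg y i \<in> cube I (d i)"
  using \<alpha> by (auto simp: PiE_iff arg_def)

lemma F_app: "i < p \<Longrightarrow> F y i = M i (arg y i)"
  by (simp add: M_alpha_def arg_def)

lemma arg_img: "arg y i ` {..<d i} = (\<lambda>j. y (\<alpha> i j)) ` {..<d i}"
  by (auto simp: arg_def)

lemma arg_fin: "i < p \<Longrightarrow> finite (arg y i ` {..<d i}) \<and> arg y i ` {..<d i} \<noteq> {}"
proof -
  assume "i < p"
  hence "0 \<in> {..<d i}" using d by fastforce
  thus ?thesis by auto
qed

lemma F_bounds:
  assumes "y \<in> cube I p" "i < p"
  shows "Min (arg y i ` {..<d i}) \<le> F y i \<and> F y i \<le> Max (arg y i ` {..<d i})"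
proof -
  have "strict_mean I (d i) (M i)" using M_strict assms(2) by blast
  hence "is_mean I (d i) (M i)" unfolding strict_mean_def by blast
  thus ?thesis using arg_cube[OF assms] unfolding is_mean_def F_app[OF assms(2)] by blast
qed

lemma F_le:
  assumes "y \<in> cube I p" "i < p" "\<forall>j<d i. y (\<alpha> i j) \<le> c"
  shows "F y i \<le> c"
proof -
  have "Max (arg y i ` {..<d i}) \<le> c"
    using arg_fin[OF assms(2), of y] assms(3) by (simp add: Max_le_iff arg_img)
  thus ?thesis using F_bounds[OF assms(1,2)] by linarith
qed

lemma F_ge:
  assumes "y \<in> cube I p" "i < p" "\<forall>j<d i. c \<le> y (\<alpha> i j)"
  shows "c \<le> F y i"
proof -
  have "c \<le> Min (arg y i ` {..<d i})"
    using arg_fin[OF assms(2), of y] assms(3) by (simp add: Min_ge_iff arg_img)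
  thus ?thesis using F_bounds[OF assms(1,2)] by linarith
qed

lemma F_const:
  assumes "y \<in> cube I p" "i < p" "\<forall>j<d i. y (\<alpha> i j) = c"
  shows "F y i = c"
  using F_le[OF assms(1,2), of c] F_ge[OF assms(1,2), of c] assms(3) by force

lemma F_lt:
  assumes "y \<in> cube I p" "i < p" "\<forall>j<d i. y (\<alpha> i j) \<le> c" "j0 < d i" "y (\<alpha> i j0) < c"
  shows "F y i < c"
proof (cases "\<exists>j<d i. \<exists>j'<d i. arg y i j \<noteq> arg y i j'")
  case True
  have "strict_mean I (d i) (M i)" using M_strict assms(2) by blast
  hence "F y i < Max (arg y i ` {..<d i})"
    using arg_cube[OF assms(1,2)] True unfolding strict_mean_def F_app[OF assms(2)] by blast
  moreover have "Max (arg y i ` {..<d i}) \<le> c"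
    using arg_fin[OF assms(2), of y] assms(3) by (simp add: Max_le_iff arg_img)
  ultimately show ?thesis by linarith
next
  case False
  have "y (\<alpha> i j) = y (\<alpha> i j0)" if "j < d i" for j
  proof -
    have "arg y i j = arg y i j0" using False that assms(4) by blast
    thus ?thesis using that assms(4) by (simp add: arg_def)
  qed
  hence "\<forall>j<d i. y (\<alpha> i j) = y (\<alpha> i j0)" by blast
  hence "F y i = y (\<alpha> i j0)" using F_const[OF assms(1,2)] by blast
  thus ?thesis using assms(5) by simp
qed

lemma F_gt:
  assumes "y \<in> cube I p" "i < p" "\<forall>j<d i. c \<le> y (\<alpha> i j)" "j0 < d i" "c < y (\<alpha> i j0)"
  shows "c < F y i"
proof (cases "\<exists>j<d i. \<exists>j'<d i. arg y i j \<noteq> arg y i j'")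
  case True
  have "strict_mean I (d i) (M i)" using M_strict assms(2) by blast
  hence "Min (arg y i ` {..<d i}) < F y i"
    using arg_cube[OF assms(1,2)] True unfolding strict_mean_def F_app[OF assms(2)] by blast
  moreover have "c \<le> Min (arg y i ` {..<d i})"
    using arg_fin[OF assms(2), of y] assms(3) by (simp add: Min_ge_iff arg_img)
  ultimately show ?thesis by linarith
next
  case False
  have "y (\<alpha> i j) = y (\<alpha> i j0)" if "j < d i" for j
  proof -
    have "arg y i j = arg y i j0" using False that assms(4) by blast
    thus ?thesis using that assms(4) by (simp add: arg_def)
  qed
  hence "\<forall>j<d i. y (\<alpha> i j) = y (\<alpha> i j0)" by blast
  hence "F y i = y (\<alpha> i j0)" using F_const[OF assms(1,2)] by blast
  thus ?thesis using assms(5) by simp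
qed

lemma I_iv: "a \<in> I \<Longrightarrow> b \<in> I \<Longrightarrow> a \<le> x \<Longrightarrow> x \<le> b \<Longrightarrow> x \<in> I"
  using I unfolding is_interval_1 by blast

lemma F_cube:
  assumes "y \<in> cube I p"
  shows "F y \<in> cube I p"
proof (rule PiE_I)
  fix i assume "i \<in> {..<p}"
  hence that: "i < p" by simp
  have fin: "finite (arg y i ` {..<d i})" "arg y i ` {..<d i} \<noteq> {}" using arg_fin[OF that] by auto
  have sub: "arg y i ` {..<d i} \<subseteq> I" using arg_cube[OF assms that] by (auto simp: PiE_iff)
  have "Min (arg y i ` {..<d i}) \<in> I" "Max (arg y i ` {..<d i}) \<in> I"
    using Min_in[OF fin] Max_in[OF fin] sub by auto
  thus "F y i \<in> I" using F_bounds[OF assms that] I_iv by blast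
next
  fix i assume "i \<notin> {..<p}" thus "F y i = undefined" by (simp add: M_alpha_def)
qed

lemma Fn_cube: "y \<in> cube I p \<Longrightarrow> (F ^^ n) y \<in> cube I p"
proof (induction n)
  case (Suc n)
  show ?case unfolding funpow.simps comp_def by (rule F_cube[OF Suc.IH[OF Suc.prems]])
qed simp

end

context setting begin

definition predc :: "nat set \<Rightarrow> bool" where
  "predc R \<longleftrightarrow> R \<subseteq> {..<p} \<and> R \<noteq> {} \<and> (\<forall>i\<in>R. \<forall>j<d i. \<alpha> i j \<in> R)"

lemma predc_all: "predc {..<p}"
proof -
  have "0 \<in> {..<p}" using p by simp
  thus ?thesis using \<alpha> unfolding predc_def by auto
qed

lemma predc_fin: "predc R \<Longrightarrow> finite R"
  unfolding predc_def using finite_subset by blast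

lemma Fn_Suc: "(F ^^ Suc n) y = F ((F ^^ n) y)" by simp
lemma Fn_Suc': "(F ^^ n) (F y) = (F ^^ Suc n) y" by (simp add: funpow_Suc_right del: funpow.simps)

lemma up_prop:
  assumes R: "predc R" and y: "y \<in> cube I p" and c: "\<forall>i\<in>R. y i \<le> c"
  shows "i \<in> R \<Longrightarrow> (F ^^ n) y i \<le> c"
proof (induction n arbitrary: i)
  case 0 thus ?case using c by simp
next
  case (Suc n)
  have "i < p" using R Suc.prems unfolding predc_def by auto
  have "\<forall>j<d i. (F ^^ n) y (\<alpha> i j) \<le> c" using Suc R unfolding predc_def by blast
  thus ?case unfolding Fn_Suc using F_le[OF Fn_cube[OF y] \<open>i < p\<close>] by blast
qed

lemma lo_prop:
  assumes R: "predc R" and y: "y \<in> cube I p" and c: "\<forall>i\<in>R. c \<le> y i"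
  shows "i \<in> R \<Longrightarrow> c \<le> (F ^^ n) y i"
proof (induction n arbitrary: i)
  case 0 thus ?case using c by simp
next
  case (Suc n)
  have "i < p" using R Suc.prems unfolding predc_def by auto
  have "\<forall>j<d i. c \<le> (F ^^ n) y (\<alpha> i j)" using Suc R unfolding predc_def by blast
  thus ?case unfolding Fn_Suc using F_ge[OF Fn_cube[OF y] \<open>i < p\<close>] by blast
qed

lemma mn_mono:
  assumes R: "predc R" and y: "y \<in> cube I p"
  shows "Min (y ` R) \<le> Min ((F ^^ n) y ` R)"
proof -
  have fin: "finite R" "R \<noteq> {}" using R predc_fin unfolding predc_def by auto
  have "\<forall>i\<in>R. Min (y ` R) \<le> y i" using fin by auto
  hence "\<forall>i\<in>R. Min (y ` R) \<le> (F ^^ n) y i" using lo_prop[OF R y] by blast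
  thus ?thesis using fin by (simp add: Min_ge_iff)
qed

lemma mx_mono:
  assumes R: "predc R" and y: "y \<in> cube I p"
  shows "Max ((F ^^ n) y ` R) \<le> Max (y ` R)"
proof -
  have fin: "finite R" "R \<noteq> {}" using R predc_fin unfolding predc_def by auto
  have "\<forall>i\<in>R. y i \<le> Max (y ` R)" using fin by auto
  hence "\<forall>i\<in>R. (F ^^ n) y i \<le> Max (y ` R)" using up_prop[OF R y] by blast
  thus ?thesis using fin by (simp add: Max_le_iff)
qed

lemma mn_inc:
  assumes R: "predc R" and y: "y \<in> cube I p"
  shows "incseq (\<lambda>n. Min ((F ^^ n) y ` R))"
proof (rule incseq_SucI)
  fix n
  show "Min ((F ^^ n) y ` R) \<le> Min ((F ^^ Suc n) y ` R)"
    using mn_mono[OF R Fn_cube[OF y, of n], of 1] by simp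
qed

lemma mx_dec:
  assumes R: "predc R" and y: "y \<in> cube I p"
  shows "decseq (\<lambda>n. Max ((F ^^ n) y ` R))"
proof (rule decseq_SucI)
  fix n
  show "Max ((F ^^ Suc n) y ` R) \<le> Max ((F ^^ n) y ` R)"
    using mx_mono[OF R Fn_cube[OF y, of n], of 1] by simp
qed

lemma mn_bounds:
  assumes R: "predc R" and y: "y \<in> cube I p"
  shows "Min (y ` {..<p}) \<le> Min ((F ^^ n) y ` R) \<and> Min ((F ^^ n) y ` R) \<le> Max (y ` {..<p})"
proof -
  have fin: "finite R" "R \<noteq> {}" and sub: "R \<subseteq> {..<p}" using R predc_fin unfolding predc_def by auto
  obtain i where i: "i \<in> R" using fin by auto
  have "Min (y ` {..<p}) \<le> Min (y ` R)" using fin sub by (intro Min_antimono) auto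
  also have "\<dots> \<le> Min ((F ^^ n) y ` R)" by (rule mn_mono[OF R y])
  finally have 1: "Min (y ` {..<p}) \<le> Min ((F ^^ n) y ` R)" .
  have "Min ((F ^^ n) y ` R) \<le> (F ^^ n) y i" using fin i by auto
  also have "\<dots> \<le> Max (y ` {..<p})"
    using up_prop[OF predc_all y, of "Max (y ` {..<p})" i n] i sub by auto
  finally show ?thesis using 1 by simp
qed

lemma mx_bounds:
  assumes R: "predc R" and y: "y \<in> cube I p"
  shows "Min (y ` {..<p}) \<le> Max ((F ^^ n) y ` R) \<and> Max ((F ^^ n) y ` R) \<le> Max (y ` {..<p})"
proof -
  have fin: "finite R" "R \<noteq> {}" and sub: "R \<subseteq> {..<p}" using R predc_fin unfolding predc_def by auto
  obtain i where i: "i \<in> R" using fin by auto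
  have "Max ((F ^^ n) y ` R) \<le> Max (y ` R)" by (rule mx_mono[OF R y])
  also have "\<dots> \<le> Max (y ` {..<p})" using fin sub by (intro Max_mono) auto
  finally have 1: "Max ((F ^^ n) y ` R) \<le> Max (y ` {..<p})" .
  have "(F ^^ n) y i \<le> Max ((F ^^ n) y ` R)" using fin i by auto
  moreover have "Min (y ` {..<p}) \<le> (F ^^ n) y i"
    using lo_prop[OF predc_all y, of "Min (y ` {..<p})" i n] i sub by auto
  ultimately show ?thesis using 1 by simp
qed

definition kmin :: "nat set \<Rightarrow> (nat \<Rightarrow> real) \<Rightarrow> real" where
  "kmin R x = (SUP n. Min ((F ^^ n) x ` R))"
definition kmax :: "nat set \<Rightarrow> (nat \<Rightarrow> real) \<Rightarrow> real" where
  "kmax R x = (INF n. Max ((F ^^ n) x ` R))"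

lemma kmin_lim:
  assumes R: "predc R" and y: "y \<in> cube I p"
  shows "(\<lambda>n. Min ((F ^^ n) y ` R)) \<longlonglongrightarrow> kmin R y"
  unfolding kmin_def
  by (rule LIMSEQ_incseq_SUP[OF _ mn_inc[OF R y]])
     (use mn_bounds[OF R y] in \<open>auto simp: bdd_above_def\<close>)

lemma kmax_lim:
  assumes R: "predc R" and y: "y \<in> cube I p"
  shows "(\<lambda>n. Max ((F ^^ n) y ` R)) \<longlonglongrightarrow> kmax R y"
  unfolding kmax_def
  by (rule LIMSEQ_decseq_INF[OF _ mx_dec[OF R y]])
     (use mx_bounds[OF R y] in \<open>auto simp: bdd_below_def\<close>)

lemma kmin_inv:
  assumes R: "predc R" and y: "y \<in> cube I p"
  shows "kmin R (F y) = kmin R y"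
proof -
  have "(\<lambda>n. Min ((F ^^ n) (F y) ` R)) \<longlonglongrightarrow> kmin R (F y)" by (rule kmin_lim[OF R F_cube[OF y]])
  moreover have "(\<lambda>n. Min ((F ^^ n) (F y) ` R)) \<longlonglongrightarrow> kmin R y"
    unfolding Fn_Suc' by (rule LIMSEQ_Suc[OF kmin_lim[OF R y]])
  ultimately show ?thesis using LIMSEQ_unique by blast
qed

lemma kmax_inv:
  assumes R: "predc R" and y: "y \<in> cube I p"
  shows "kmax R (F y) = kmax R y"
proof -
  have "(\<lambda>n. Max ((F ^^ n) (F y) ` R)) \<longlonglongrightarrow> kmax R (F y)" by (rule kmax_lim[OF R F_cube[OF y]])
  moreover have "(\<lambda>n. Max ((F ^^ n) (F y) ` R)) \<longlonglongrightarrow> kmax R y"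
    unfolding Fn_Suc' by (rule LIMSEQ_Suc[OF kmax_lim[OF R y]])
  ultimately show ?thesis using LIMSEQ_unique by blast
qed

lemma kmin_mean:
  assumes R: "predc R"
  shows "invariant_mean I p F (kmin R)"
  unfolding invariant_mean_def is_mean_def
proof (intro conjI ballI)
  fix x assume x: "x \<in> cube I p"
  show "kmin R (F x) = kmin R x" by (rule kmin_inv[OF R x])
  show "Min (x ` {..<p}) \<le> kmin R x"
    using LIMSEQ_le_const[OF kmin_lim[OF R x]] mn_bounds[OF R x] by blast
  show "kmin R x \<le> Max (x ` {..<p})"
    using LIMSEQ_le_const2[OF kmin_lim[OF R x]] mn_bounds[OF R x] by blast
qed

lemma kmax_mean:
  assumes R: "predc R"
  shows "invariant_mean I p F (kmax R)"
  unfolding invariant_mean_def is_mean_def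
proof (intro conjI ballI)
  fix x assume x: "x \<in> cube I p"
  show "kmax R (F x) = kmax R x" by (rule kmax_inv[OF R x])
  show "Min (x ` {..<p}) \<le> kmax R x"
    using LIMSEQ_le_const[OF kmax_lim[OF R x]] mx_bounds[OF R x] by blast
  show "kmax R x \<le> Max (x ` {..<p})"
    using LIMSEQ_le_const2[OF kmax_lim[OF R x]] mx_bounds[OF R x] by blast
qed

end

context setting begin

lemma nonunique:
  assumes R: "predc R" and A_sub: "\<forall>n. A n \<subseteq> R" and A_ne: "\<forall>n. A n \<noteq> {}"
    and A_co: "\<forall>n. R - A n \<noteq> {}"
    and A_step: "\<forall>n. \<forall>i\<in>R. \<forall>j<d i. (\<alpha> i j \<in> A n \<longleftrightarrow> i \<in> A (Suc n))"
  shows "\<not> (\<exists>K. invariant_mean I p F K \<and>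
            (\<forall>K'. invariant_mean I p F K' \<longrightarrow> (\<forall>x\<in>cube I p. K' x = K x)))"
proof
  assume "\<exists>K. invariant_mean I p F K \<and>
            (\<forall>K'. invariant_mean I p F K' \<longrightarrow> (\<forall>x\<in>cube I p. K' x = K x))"
  then obtain K where K: "\<forall>K'. invariant_mean I p F K' \<longrightarrow> (\<forall>x\<in>cube I p. K' x = K x)" by blast
  obtain a b where ab: "a \<in> I" "b \<in> I" "a < b" using I_nondeg by blast
  have Rsub: "R \<subseteq> {..<p}" and Rcl: "\<forall>i\<in>R. \<forall>j<d i. \<alpha> i j \<in> R" using R unfolding predc_def by auto
  define x where "x = restrict (\<lambda>i. if i \<in> A 0 then a else b) {..<p}"
  have x: "x \<in> cube I p"
  proof (rule PiE_I)
    fix i assume "i \<in> {..<p}" thus "x i \<in> I" using ab by (simp add: x_def)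
  next
    fix i assume "i \<notin> {..<p}" thus "x i = undefined" by (simp add: x_def)
  qed
  have val: "\<forall>i\<in>R. (F ^^ n) x i = (if i \<in> A n then a else b)" for n
  proof (induction n)
    case 0 show ?case using Rsub by (auto simp: x_def)
  next
    case (Suc n)
    show ?case
    proof
      fix i assume i: "i \<in> R"
      hence ip: "i < p" using Rsub by auto
      show "(F ^^ Suc n) x i = (if i \<in> A (Suc n) then a else b)"
      proof (cases "i \<in> A (Suc n)")
        case True
        hence "\<forall>j<d i. (F ^^ n) x (\<alpha> i j) = a" using A_step Suc.IH Rcl i by auto
        thus ?thesis using True F_const[OF Fn_cube[OF x] ip] unfolding Fn_Suc by simp
      next
        case False
        hence "\<forall>j<d i. (F ^^ n) x (\<alpha> i j) = b" using A_step Suc.IH Rcl i by auto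
        thus ?thesis using False F_const[OF Fn_cube[OF x] ip] unfolding Fn_Suc by simp
      qed
    qed
  qed
  have img: "(F ^^ n) x ` R = {a, b}" for n
  proof
    show "(F ^^ n) x ` R \<subseteq> {a, b}" using val[of n] by auto
    obtain u where "u \<in> A n" using A_ne by blast
    hence "a \<in> (F ^^ n) x ` R" using val[of n] A_sub by (metis image_eqI subsetD)
    moreover obtain v where "v \<in> R - A n" using A_co by blast
    hence "b \<in> (F ^^ n) x ` R" using val[of n] by (metis DiffD1 DiffD2 image_eqI)
    ultimately show "{a, b} \<subseteq> (F ^^ n) x ` R" by blast
  qed
  have "kmin R x = a" unfolding kmin_def img using ab by simp
  moreover have "kmax R x = b" unfolding kmax_def img using ab by simp
  moreover have "kmin R x = K x" using K kmin_mean[OF R] x by blast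
  moreover have "kmax R x = K x" using K kmax_mean[OF R] x by blast
  ultimately show False using ab by simp
qed

end


lemma mod_cancel: "(a + c) mod k = (b + c) mod k \<Longrightarrow> a mod (k::nat) = b mod k"
  by (simp add: add.commute nat_mod_eq_iff)

lemma Restr_rtr_tgt: "(x, y) \<in> (Restr G R)\<^sup>* \<Longrightarrow> x \<in> R \<Longrightarrow> y \<in> R"
  by (induction rule: rtrancl_induct) auto

lemma Restr_pow_tgt: "(x, y) \<in> (Restr G R) ^^ n \<Longrightarrow> x \<in> R \<Longrightarrow> y \<in> R"
  using Restr_rtr_tgt relpow_imp_rtrancl by metis

context setting begin

abbreviation "RS \<equiv> root_set {..<p} E"

lemma edge_iff: "(u, w) \<in> E \<longleftrightarrow> (\<exists>j. w < p \<and> j < d w \<and> u = \<alpha> w j)"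
  unfolding inc_edges_def by auto

lemma edge_in: "i < p \<Longrightarrow> j < d i \<Longrightarrow> (\<alpha> i j, i) \<in> E"
  unfolding edge_iff by blast

lemma edge_lt: "(u, w) \<in> E \<Longrightarrow> u < p \<and> w < p"
  unfolding edge_iff using \<alpha> by auto

lemma rtr_src: "(u, v) \<in> E\<^sup>* \<Longrightarrow> u \<noteq> v \<Longrightarrow> u < p"
  by (induction rule: converse_rtrancl_induct) (auto dest: edge_lt)

lemma scc_self: "v \<in> scc E v" unfolding scc_def by simp

lemma scc_eq: "w \<in> scc E v \<Longrightarrow> scc E w = scc E v"
  unfolding scc_def by (auto intro: rtrancl_trans)

lemma scc_sub: "v < p \<Longrightarrow> scc E v \<subseteq> {..<p}"
  unfolding scc_def using rtr_src by fastforce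

definition rootc :: "nat \<Rightarrow> bool" where
  "rootc v \<longleftrightarrow> v < p \<and> (\<forall>(u, w)\<in>E. w \<in> scc E v \<longrightarrow> u \<in> scc E v)"

lemma RS_iff: "x \<in> RS \<longleftrightarrow> (\<exists>v. rootc v \<and> x \<in> scc E v)"
  unfolding root_set_def rootc_def by blast

lemma rootc_predc: "rootc v \<Longrightarrow> predc (scc E v)"
  unfolding predc_def
proof (intro conjI)
  assume r: "rootc v"
  thus "scc E v \<subseteq> {..<p}" using scc_sub rootc_def by blast
  show "scc E v \<noteq> {}" using scc_self by blast
  show "\<forall>i\<in>scc E v. \<forall>j<d i. \<alpha> i j \<in> scc E v"
  proof (intro ballI allI impI)
    fix i j assume i: "i \<in> scc E v" and j: "j < d i"
    have "i < p" using i scc_sub r rootc_def by blast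
    hence "(\<alpha> i j, i) \<in> E" using edge_in j by blast
    thus "\<alpha> i j \<in> scc E v" using r i unfolding rootc_def by blast
  qed
qed

lemma RS_sub: "RS \<subseteq> {..<p}"
  using RS_iff rootc_predc predc_def by blast

lemma RS_closed: "i \<in> RS \<Longrightarrow> j < d i \<Longrightarrow> \<alpha> i j \<in> RS"
  using RS_iff rootc_predc predc_def by meson

lemma exists_root_anc:
  assumes v: "v < p"
  shows "\<exists>u. rootc u \<and> (u, v) \<in> E\<^sup>*"
proof -
  define anc where "anc w = {u. (u, w) \<in> E\<^sup>*}" for w
  have anc_fin: "finite (anc w)" for w
  proof -
    have "anc w \<subseteq> insert w {..<p}" unfolding anc_def using rtr_src by auto
    thus ?thesis using finite_subset by blast
  qed
  obtain u where u: "(u, v) \<in> E\<^sup>*" and umin: "\<forall>y. (y, v) \<in> E\<^sup>* \<longrightarrow> card (anc u) \<le> card (anc y)"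
    using ex_has_least_nat[of "\<lambda>u. (u, v) \<in> E\<^sup>*" v "\<lambda>u. card (anc u)"] by auto
  have "rootc u" unfolding rootc_def
  proof (intro conjI)
    show "u < p" using v u rtr_src by (cases "u = v") auto
  next
    show "\<forall>(x, w)\<in>E. w \<in> scc E u \<longrightarrow> x \<in> scc E u"
    proof (clarify)
    fix x w assume xw: "(x, w) \<in> E" and w: "w \<in> scc E u"
    have xu: "(x, u) \<in> E\<^sup>*" using xw w unfolding scc_def by auto
    hence "(x, v) \<in> E\<^sup>*" using u by auto
    hence c1: "card (anc u) \<le> card (anc x)" using umin by blast
    have sub: "anc x \<subseteq> anc u" unfolding anc_def using xu by (auto intro: rtrancl_trans)
    hence "anc x = anc u" using c1 anc_fin by (meson card_seteq)
    hence "u \<in> anc x" unfolding anc_def by auto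
    thus "x \<in> scc E u" using xu unfolding anc_def scc_def by auto
    qed
  qed
  thus ?thesis using u by blast
qed

lemma RS_ne: "RS \<noteq> {}"
  using exists_root_anc[of 0] p RS_iff scc_self by fastforce

lemma RS_predc: "predc RS"
  using RS_sub RS_ne RS_closed unfolding predc_def by blast

lemma path_in_scc:
  assumes u: "u \<in> scc E a" and v: "v \<in> scc E a" and uv: "(u, v) \<in> E\<^sup>*"
  shows "(u, v) \<in> (Restr E (scc E a))\<^sup>*"
proof -
  have "(w, v) \<in> E\<^sup>* \<Longrightarrow> (u, w) \<in> (Restr E (scc E a))\<^sup>*" if "(u, w) \<in> E\<^sup>*" for w
    using that
  proof (induction rule: rtrancl_induct)
    case base thus ?case by simp
  next
    case (step w w')
    have "(w, v) \<in> E\<^sup>*" using step by auto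
    hence IH: "(u, w) \<in> (Restr E (scc E a))\<^sup>*" using step.IH by blast
    have "(a, w) \<in> E\<^sup>*" using u step(1) unfolding scc_def by (auto intro: rtrancl_trans)
    moreover have "(w, a) \<in> E\<^sup>*" using \<open>(w, v) \<in> E\<^sup>*\<close> v unfolding scc_def by (auto intro: rtrancl_trans)
    ultimately have "w \<in> scc E a" unfolding scc_def by auto
    have "(a, w') \<in> E\<^sup>*" using \<open>(a, w) \<in> E\<^sup>*\<close> step(2) by auto
    moreover have "(w', a) \<in> E\<^sup>*" using step(4) v unfolding scc_def by (auto intro: rtrancl_trans)
    ultimately have "w' \<in> scc E a" unfolding scc_def by auto
    hence "(w, w') \<in> Restr E (scc E a)" using \<open>w \<in> scc E a\<close> step(2) by auto
    with IH show ?case by (rule rtrancl_into_rtrancl)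
  qed
  thus ?thesis using uv by blast
qed

end

context setting begin

abbreviation "ER \<equiv> Restr E RS"

lemma forward_irred:
  assumes U: "\<exists>K. invariant_mean I p F K \<and>
            (\<forall>K'. invariant_mean I p F K' \<longrightarrow> (\<forall>x\<in>cube I p. K' x = K x))"
  shows "irreducible_graph RS ER"
  unfolding irreducible_graph_def
proof (rule ccontr)
  assume "\<not> (\<forall>u\<in>RS. \<forall>v\<in>RS. (u, v) \<in> ER\<^sup>*)"
  then obtain u v where u: "u \<in> RS" and v: "v \<in> RS" and nuv: "(u, v) \<notin> ER\<^sup>*" by blast
  obtain a where a: "rootc a" "u \<in> scc E a" using u RS_iff by blast
  obtain b where b: "rootc b" "v \<in> scc E b" using v RS_iff by blast
  show False
  proof (cases "scc E a = scc E b")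
    case True
    have "(u, a) \<in> E\<^sup>*" "(a, v) \<in> E\<^sup>*" using a b True unfolding scc_def by auto
    hence "(u, v) \<in> E\<^sup>*" by auto
    hence "(u, v) \<in> (Restr E (scc E a))\<^sup>*" using path_in_scc a b True by blast
    moreover have "Restr E (scc E a) \<subseteq> ER" using a RS_iff by blast
    ultimately have "(u, v) \<in> ER\<^sup>*" using rtrancl_mono by blast
    thus False using nuv by blast
  next
    case False
    define R where "R = scc E a \<union> scc E b"
    have pa: "predc (scc E a)" and pb: "predc (scc E b)" using a b rootc_predc by auto
    have R: "predc R" using pa pb unfolding R_def predc_def by blast
    have disj: "w \<in> scc E a \<Longrightarrow> w \<in> scc E b \<Longrightarrow> False" for w
      using False scc_eq by metis
    have "\<not> (\<exists>K. invariant_mean I p F K \<and>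
            (\<forall>K'. invariant_mean I p F K' \<longrightarrow> (\<forall>x\<in>cube I p. K' x = K x)))"
    proof (rule nonunique[OF R])
      show "\<forall>n. (\<lambda>n. scc E a) n \<subseteq> R" unfolding R_def by blast
      show "\<forall>n. (\<lambda>n. scc E a) n \<noteq> {}" using a by blast
      show "\<forall>n. R - (\<lambda>n. scc E a) n \<noteq> {}" using b disj unfolding R_def by blast
      show "\<forall>n. \<forall>i\<in>R. \<forall>j<d i. (\<alpha> i j \<in> (\<lambda>n. scc E a) n \<longleftrightarrow> i \<in> (\<lambda>n. scc E a) (Suc n))"
      proof (intro allI ballI impI)
        fix n i j assume i: "i \<in> R" and j: "j < d i"
        show "(\<alpha> i j \<in> scc E a) \<longleftrightarrow> i \<in> scc E a"
        proof
          assume h: "\<alpha> i j \<in> scc E a"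
          show "i \<in> scc E a"
          proof (rule ccontr)
            assume "i \<notin> scc E a"
            hence "i \<in> scc E b" using i R_def by blast
            hence "\<alpha> i j \<in> scc E b" using pb j unfolding predc_def by blast
            thus False using h disj by blast
          qed
        next
          assume "i \<in> scc E a" thus "\<alpha> i j \<in> scc E a" using pa j unfolding predc_def by blast
        qed
      qed
    qed
    thus False using U by blast
  qed
qed

lemma forward_aper:
  assumes U: "\<exists>K. invariant_mean I p F K \<and>
            (\<forall>K'. invariant_mean I p F K' \<longrightarrow> (\<forall>x\<in>cube I p. K' x = K x))"
  shows "aperiodic_graph RS ER"
  unfolding aperiodic_graph_def
proof
  assume "\<exists>k::nat. k > 1 \<and> (\<forall>v\<in>RS. \<forall>n>0. (v, v) \<in> ER ^^ n \<longrightarrow> k dvd n)"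
  then obtain k :: nat where k: "k > 1" and per: "\<forall>v\<in>RS. \<forall>n>0. (v, v) \<in> ER ^^ n \<longrightarrow> k dvd n" by blast
  have irr: "\<forall>u\<in>RS. \<forall>v\<in>RS. (u, v) \<in> ER\<^sup>*"
    using forward_irred[OF U] unfolding irreducible_graph_def .
  obtain r0 where r0: "r0 \<in> RS" using RS_ne by blast
  have cl: "\<forall>n. (r0, r0) \<in> ER ^^ n \<longrightarrow> k dvd n" using per r0 by (metis dvd_0_right gr0I)
  have wd: "L1 mod k = L2 mod k" if "(r0, v) \<in> ER ^^ L1" "(r0, v) \<in> ER ^^ L2" for v L1 L2
  proof -
    have "v \<in> RS" using that(1) r0 Restr_pow_tgt by metis
    then obtain B where B: "(v, r0) \<in> ER ^^ B" using irr r0 rtrancl_power by blast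
    have "(r0, r0) \<in> ER ^^ (L1 + B)" using that(1) B relpow_add by blast
    hence 1: "(L1 + B) mod k = 0" using cl by auto
    have "(r0, r0) \<in> ER ^^ (L2 + B)" using that(2) B relpow_add by blast
    hence 2: "(L2 + B) mod k = 0" using cl by auto
    show ?thesis using 1 2 mod_cancel by metis
  qed
  define A where "A n = {v \<in> RS. \<exists>L. (r0, v) \<in> ER ^^ L \<and> L mod k = n mod k}" for n
  have out: "\<exists>w. (v, w) \<in> ER" if v: "v \<in> RS" for v
  proof -
    have vp: "v < p" using v RS_sub by auto
    have "0 < d v" using d vp by fastforce
    hence e: "(\<alpha> v 0, v) \<in> E" using edge_in vp by blast
    have av: "\<alpha> v 0 \<in> RS" using RS_closed v \<open>0 < d v\<close> by blast
    hence "(\<alpha> v 0, v) \<in> ER" using e v by blast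
    show ?thesis
    proof (cases "\<alpha> v 0 = v")
      case True thus ?thesis using \<open>(\<alpha> v 0, v) \<in> ER\<close> by metis
    next
      case False
      have "(v, \<alpha> v 0) \<in> ER\<^sup>*" using irr v av by blast
      thus ?thesis using False by (metis converse_rtranclE)
    qed
  qed
  have walk: "\<exists>w. (r0, w) \<in> ER ^^ n" for n
  proof (induction n)
    case 0 show ?case by auto
  next
    case (Suc n)
    then obtain w where w: "(r0, w) \<in> ER ^^ n" by blast
    hence "w \<in> RS" using r0 Restr_pow_tgt by metis
    then obtain w' where "(w, w') \<in> ER" using out by blast
    thus ?case using w by auto
  qed
  have A_ne: "A n \<noteq> {}" for n
  proof -
    obtain w where w: "(r0, w) \<in> ER ^^ n" using walk by blast
    hence "w \<in> RS" using r0 Restr_pow_tgt by metis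
    thus ?thesis using w unfolding A_def by blast
  qed
  have suc_ne: "Suc n mod k \<noteq> n mod k" for n
    using k by (simp add: mod_Suc)
  have "\<not> (\<exists>K. invariant_mean I p F K \<and>
            (\<forall>K'. invariant_mean I p F K' \<longrightarrow> (\<forall>x\<in>cube I p. K' x = K x)))"
  proof (rule nonunique[OF RS_predc])
    show "\<forall>n. A n \<subseteq> RS" unfolding A_def by blast
    show "\<forall>n. A n \<noteq> {}" using A_ne by blast
    show "\<forall>n. RS - A n \<noteq> {}"
    proof
      fix n
      obtain w where w: "w \<in> A (Suc n)" using A_ne by blast
      have "w \<notin> A n"
      proof
        assume "w \<in> A n"
        then obtain L1 where "(r0, w) \<in> ER ^^ L1" "L1 mod k = n mod k" unfolding A_def by blast
        moreover obtain L2 where "(r0, w) \<in> ER ^^ L2" "L2 mod k = Suc n mod k" using w unfolding A_def by blast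
        ultimately show False using wd suc_ne by metis
      qed
      thus "RS - A n \<noteq> {}" using w unfolding A_def by blast
    qed
    show "\<forall>n. \<forall>i\<in>RS. \<forall>j<d i. (\<alpha> i j \<in> A n \<longleftrightarrow> i \<in> A (Suc n))"
    proof (intro allI ballI impI)
      fix n i j assume i: "i \<in> RS" and j: "j < d i"
      have u: "\<alpha> i j \<in> RS" using RS_closed i j by blast
      have "(\<alpha> i j, i) \<in> E" using edge_in j i RS_sub by blast
      hence e: "(\<alpha> i j, i) \<in> ER" using u i by blast
      show "\<alpha> i j \<in> A n \<longleftrightarrow> i \<in> A (Suc n)"
      proof
        assume "\<alpha> i j \<in> A n"
        then obtain L where L: "(r0, \<alpha> i j) \<in> ER ^^ L" "L mod k = n mod k" unfolding A_def by blast
        have "(r0, i) \<in> ER ^^ Suc L" using L(1) e by auto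
        moreover have "Suc L mod k = Suc n mod k" using L(2) by (simp add: mod_Suc)
        ultimately show "i \<in> A (Suc n)" using i unfolding A_def by blast
      next
        assume "i \<in> A (Suc n)"
        then obtain L where L: "(r0, i) \<in> ER ^^ L" "L mod k = Suc n mod k" unfolding A_def by blast
        obtain L' where L': "(r0, \<alpha> i j) \<in> ER ^^ L'" using irr r0 u rtrancl_power by blast
        have "(r0, i) \<in> ER ^^ Suc L'" using L' e by auto
        hence "Suc L' mod k = Suc n mod k" using wd L by metis
        hence "L' mod k = n mod k" using mod_cancel[of L' 1 k n] by simp
        thus "\<alpha> i j \<in> A n" using u L' unfolding A_def by blast
      qed
    qed
  qed
  thus False using U by blast
qed

lemma forward:
  assumes U: "\<exists>K. invariant_mean I p F K \<and>
            (\<forall>K'. invariant_mean I p F K' \<longrightarrow> (\<forall>x\<in>cube I p. K' x = K x))"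
  shows "ergodic_graph RS ER"
  unfolding ergodic_graph_def using RS_ne forward_irred[OF U] forward_aper[OF U] by blast

end


lemma relpow_comp: "(a, b) \<in> G ^^ m \<Longrightarrow> (b, c) \<in> G ^^ n \<Longrightarrow> (a, c) \<in> G ^^ (m + n)"
  using relpow_add by blast

lemma primitive:
  fixes G :: "(nat \<times> nat) set" and V :: "nat set"
  assumes fin: "finite V"
    and irr: "\<forall>u\<in>V. \<forall>v\<in>V. (u, v) \<in> G\<^sup>*"
    and aper: "aperiodic_graph V G"
    and s: "s \<in> V"
    and loop: "n0 > 0" "(s, s) \<in> G ^^ n0"
  shows "\<exists>t. \<forall>r\<in>V. (s, r) \<in> G ^^ t"
proof -
  define A where "A = {n. (s, s) \<in> G ^^ n}"
  have A0: "0 \<in> A" unfolding A_def by simp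
  have Aadd: "a \<in> A \<Longrightarrow> b \<in> A \<Longrightarrow> a + b \<in> A" for a b
    unfolding A_def using relpow_comp by (metis mem_Collect_eq)
  have Amul: "a \<in> A \<Longrightarrow> q * a \<in> A" for a q
    by (induction q) (auto simp: A0 Aadd)
  define D where "D = {g. g > 0 \<and> (\<exists>x. x \<in> A \<and> x + g \<in> A)}"
  have "0 + n0 \<in> A" using loop unfolding A_def by simp
  hence "n0 \<in> D" unfolding D_def using loop(1) A0 by blast
  define g where "g = (LEAST g. g \<in> D)"
  have gD: "g \<in> D" unfolding g_def using \<open>n0 \<in> D\<close> by (rule LeastI)
  then obtain x0 where g0: "g > 0" and x0: "x0 \<in> A" "x0 + g \<in> A" unfolding D_def by blast
  have gmin: "h < g \<Longrightarrow> h \<notin> D" for h unfolding g_def by (rule not_less_Least)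
  have dvdA: "g dvd a" if a: "a \<in> A" for a
  proof -
    define q where "q = a div g"
    define r where "r = a mod g"
    have aq: "a = q * g + r" unfolding q_def r_def by simp
    have "a + q * x0 \<in> A" using a Amul[OF x0(1)] Aadd by blast
    moreover have "q * (x0 + g) \<in> A" using Amul[OF x0(2)] .
    moreover have "a + q * x0 = q * (x0 + g) + r" using aq by (simp add: algebra_simps)
    ultimately have "r > 0 \<Longrightarrow> r \<in> D" unfolding D_def by auto
    moreover have "r < g" unfolding r_def using g0 by simp
    ultimately have "r = 0" using gmin by blast
    thus ?thesis unfolding r_def by auto
  qed
  have g1: "g = 1"
  proof (rule ccontr)
    assume "g \<noteq> 1"
    hence "g > 1" using g0 by simp
    moreover have "\<forall>v\<in>V. \<forall>n>0. (v, v) \<in> G ^^ n \<longrightarrow> g dvd n"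
    proof (intro ballI allI impI)
      fix v n assume v: "v \<in> V" and "n > 0" and vv: "(v, v) \<in> G ^^ n"
      obtain a where a: "(s, v) \<in> G ^^ a" using irr s v rtrancl_power by blast
      obtain b where b: "(v, s) \<in> G ^^ b" using irr s v rtrancl_power by blast
      have "a + b \<in> A" unfolding A_def using relpow_comp[OF a b] by simp
      moreover have "a + n + b \<in> A" unfolding A_def using relpow_comp[OF relpow_comp[OF a vv] b] by simp
      ultimately have "g dvd (a + b)" "g dvd (a + b + n)" using dvdA by (auto simp: add.commute add.left_commute)
      thus "g dvd n" using dvd_add_right_iff by blast
    qed
    ultimately show False using aper unfolding aperiodic_graph_def by blast
  qed
  have x1: "x0 + 1 \<in> A" using x0 g1 by simp
  have large: "n \<in> A" if n: "n \<ge> x0 * x0" for n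
  proof (cases "x0 = 0")
    case True
    hence "1 \<in> A" using x1 by simp
    thus ?thesis using Amul[of 1 n] by simp
  next
    case False
    define q where "q = n div x0"
    define r where "r = n mod x0"
    have "r < x0" unfolding r_def using False by simp
    moreover have "x0 \<le> q" unfolding q_def using n False
      by (metis div_le_mono nonzero_mult_div_cancel_right)
    ultimately have rq: "r \<le> q" by simp
    have "n = q * x0 + r" unfolding q_def r_def by simp
    also have "\<dots> = (q - r) * x0 + r * (x0 + 1)" using rq
      by (simp add: algebra_simps diff_mult_distrib)
    finally have "n = (q - r) * x0 + r * (x0 + 1)" .
    moreover have "(q - r) * x0 \<in> A" "r * (x0 + 1) \<in> A" using Amul x0(1) x1 by blast+
    ultimately show ?thesis using Aadd by metis
  qed
  define a where "a r = (SOME a. (s, r) \<in> G ^^ a)" for r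
  have a: "(s, r) \<in> G ^^ a r" if "r \<in> V" for r
  proof -
    have "\<exists>a. (s, r) \<in> G ^^ a" using irr s that rtrancl_power by blast
    thus ?thesis unfolding a_def by (rule someI_ex)
  qed
  define t where "t = x0 * x0 + (\<Sum>r\<in>V. a r)"
  have "(s, r) \<in> G ^^ t" if r: "r \<in> V" for r
  proof -
    have "a r \<le> (\<Sum>r\<in>V. a r)" using fin r by (intro member_le_sum) auto
    hence "t - a r \<ge> x0 * x0" unfolding t_def by simp
    hence "(s, s) \<in> G ^^ (t - a r)" using large unfolding A_def by blast
    from relpow_comp[OF this a[OF r]] show ?thesis using \<open>a r \<le> (\<Sum>r\<in>V. a r)\<close> unfolding t_def by simp
  qed
  thus ?thesis by blast
qed


lemma relpow_mono':
  fixes R S :: "('a \<times> 'a) set"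
  shows "R \<subseteq> S \<Longrightarrow> (x, y) \<in> R ^^ n \<Longrightarrow> (x, y) \<in> S ^^ n"
proof (induction n arbitrary: y)
  case 0 thus ?case by simp
next
  case (Suc n)
  from Suc.prems(2) obtain w where "(x, w) \<in> R ^^ n" "(w, y) \<in> R" by (rule relpow_Suc_E)
  thus ?case using Suc by (blast intro: relpow_Suc_I)
qed

context setting begin

definition spread :: "(nat \<Rightarrow> real) \<Rightarrow> real" where
  "spread z = Max (z ` {..<p}) - Min (z ` {..<p})"

lemma fin_p: "finite ({..<p}::nat set)" "{..<p} \<noteq> ({}::nat set)"
proof -
  have "0 \<in> {..<p}" using p by simp
  thus "finite ({..<p}::nat set)" "{..<p} \<noteq> ({}::nat set)" by auto
qed

lemma low_walk:
  assumes y: "y \<in> cube I p" and c: "\<forall>i<p. y i \<le> c" and lo: "(F ^^ n) y i < c"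
  shows "(i, i') \<in> E ^^ t \<Longrightarrow> (F ^^ (n + t)) y i' < c"
proof (induction t arbitrary: i')
  case 0 thus ?case using lo by simp
next
  case (Suc t)
  from Suc.prems obtain w where w: "(i, w) \<in> E ^^ t" "(w, i') \<in> E" by (rule relpow_Suc_E)
  have IH: "(F ^^ (n + t)) y w < c" using Suc.IH w(1) .
  obtain j where j: "i' < p" "j < d i'" "w = \<alpha> i' j" using w(2) edge_iff by blast
  have all: "\<forall>j<d i'. (F ^^ (n + t)) y (\<alpha> i' j) \<le> c"
    using up_prop[OF predc_all y, of c] c \<alpha> j(1) by auto
  show ?case using F_lt[OF Fn_cube[OF y] j(1) all j(2)] IH j(3) by simp
qed

lemma high_walk:
  assumes y: "y \<in> cube I p" and c: "\<forall>i<p. c \<le> y i" and lo: "c < (F ^^ n) y i"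
  shows "(i, i') \<in> E ^^ t \<Longrightarrow> c < (F ^^ (n + t)) y i'"
proof (induction t arbitrary: i')
  case 0 thus ?case using lo by simp
next
  case (Suc t)
  from Suc.prems obtain w where w: "(i, w) \<in> E ^^ t" "(w, i') \<in> E" by (rule relpow_Suc_E)
  have IH: "c < (F ^^ (n + t)) y w" using Suc.IH w(1) .
  obtain j where j: "i' < p" "j < d i'" "w = \<alpha> i' j" using w(2) edge_iff by blast
  have all: "\<forall>j<d i'. c \<le> (F ^^ (n + t)) y (\<alpha> i' j)"
    using lo_prop[OF predc_all y, of c] c \<alpha> j(1) by auto
  show ?case using F_gt[OF Fn_cube[OF y] j(1) all j(2)] IH j(3) by simp
qed

lemma persist_low:
  assumes y: "y \<in> cube I p" and c: "\<forall>i<p. y i \<le> c" and lo: "\<forall>i\<in>RS. (F ^^ n) y i < c"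
  shows "\<forall>i\<in>RS. (F ^^ (n + k)) y i < c"
proof (induction k)
  case 0 thus ?case using lo by simp
next
  case (Suc k)
  show ?case
  proof
    fix i assume i: "i \<in> RS"
    have ip: "i < p" using i RS_sub by auto
    have d0: "0 < d i" using d ip by fastforce
    have all: "\<forall>j<d i. (F ^^ (n + k)) y (\<alpha> i j) \<le> c"
      using up_prop[OF predc_all y, of c] c \<alpha> ip by auto
    have "(F ^^ (n + k)) y (\<alpha> i 0) < c" using Suc.IH RS_closed[OF i d0] by blast
    thus "(F ^^ (n + Suc k)) y i < c" using F_lt[OF Fn_cube[OF y] ip all d0] by simp
  qed
qed

lemma persist_high:
  assumes y: "y \<in> cube I p" and c: "\<forall>i<p. c \<le> y i" and lo: "\<forall>i\<in>RS. c < (F ^^ n) y i"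
  shows "\<forall>i\<in>RS. c < (F ^^ (n + k)) y i"
proof (induction k)
  case 0 thus ?case using lo by simp
next
  case (Suc k)
  show ?case
  proof
    fix i assume i: "i \<in> RS"
    have ip: "i < p" using i RS_sub by auto
    have d0: "0 < d i" using d ip by fastforce
    have all: "\<forall>j<d i. c \<le> (F ^^ (n + k)) y (\<alpha> i j)"
      using lo_prop[OF predc_all y, of c] c \<alpha> ip by auto
    have "c < (F ^^ (n + k)) y (\<alpha> i 0)" using Suc.IH RS_closed[OF i d0] by blast
    thus "c < (F ^^ (n + Suc k)) y i" using F_gt[OF Fn_cube[OF y] ip all d0] by simp
  qed
qed

context
  assumes erg: "ergodic_graph RS ER"
begin

lemma irr: "\<forall>u\<in>RS. \<forall>v\<in>RS. (u, v) \<in> ER\<^sup>*"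
  using erg unfolding ergodic_graph_def irreducible_graph_def by blast

lemma reach: "s \<in> RS \<Longrightarrow> v < p \<Longrightarrow> \<exists>l. (s, v) \<in> E ^^ l"
proof -
  assume s: "s \<in> RS" and v: "v < p"
  obtain u where u: "rootc u" "(u, v) \<in> E\<^sup>*" using exists_root_anc[OF v] by blast
  have "u \<in> RS" using u(1) RS_iff scc_self by blast
  hence "(s, u) \<in> ER\<^sup>*" using irr s by blast
  hence "(s, u) \<in> E\<^sup>*" using rtrancl_mono[of ER E] by blast
  hence "(s, v) \<in> E\<^sup>*" using u(2) by auto
  thus ?thesis using rtrancl_power by blast
qed

lemma prim: "s \<in> RS \<Longrightarrow> \<exists>t. \<forall>r\<in>RS. (s, r) \<in> E ^^ t"
proof -
  assume s: "s \<in> RS"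
  have sp: "s < p" using s RS_sub by auto
  have d0: "0 < d s" using d sp by fastforce
  have u: "\<alpha> s 0 \<in> RS" using RS_closed[OF s d0] .
  have "(\<alpha> s 0, s) \<in> E" using edge_in[OF sp d0] .
  hence e: "(\<alpha> s 0, s) \<in> ER" using u s by blast
  obtain m where m: "(s, \<alpha> s 0) \<in> ER ^^ m" using irr s u rtrancl_power by blast
  have "(s, s) \<in> ER ^^ Suc m" using relpow_Suc_I[OF m e] .
  moreover have "finite RS" using RS_sub finite_subset by blast
  moreover have "aperiodic_graph RS ER" using erg unfolding ergodic_graph_def by blast
  ultimately obtain t where "\<forall>r\<in>RS. (s, r) \<in> ER ^^ t"
    using primitive[of RS ER s "Suc m"] irr s by blast
  thus ?thesis using relpow_mono'[of ER E] by blast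
qed

lemma all_time:
  assumes s: "s \<in> RS" and P: "\<forall>m\<ge>n0. \<forall>v<p. \<forall>l. (s, v) \<in> E ^^ l \<longrightarrow> Q (m + l) v"
  shows "\<exists>N. \<forall>v<p. Q N v"
proof -
  define l' where "l' v = (SOME l. (s, v) \<in> E ^^ l)" for v
  have l': "(s, v) \<in> E ^^ l' v" if "v < p" for v
    unfolding l'_def using reach[OF s that] by (rule someI_ex)
  define T where "T = (\<Sum>v<p. l' v)"
  have "Q (n0 + T) v" if v: "v < p" for v
  proof -
    have le: "l' v \<le> T" unfolding T_def using v by (intro member_le_sum) auto
    have "Q ((n0 + T - l' v) + l' v) v" using P[rule_format, of "n0 + T - l' v" v "l' v"] l'[OF v] v le
      by simp
    thus ?thesis using le by simp
  qed
  thus ?thesis by blast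
qed


lemma spread_dec:
  assumes y: "y \<in> cube I p" and nc: "\<exists>i<p. \<exists>j<p. y i \<noteq> y j"
  shows "\<exists>n. spread ((F ^^ n) y) < spread y"
proof -
  define c where "c = Max (y ` {..<p})"
  define c' where "c' = Min (y ` {..<p})"
  have yc: "\<forall>i<p. y i \<le> c" "\<forall>i<p. c' \<le> y i" using fin_p by (auto simp: c_def c'_def)
  have mn: "c' \<le> Min ((F ^^ n) y ` {..<p})" for n using mn_mono[OF predc_all y] c'_def by simp
  have mx: "Max ((F ^^ n) y ` {..<p}) \<le> c" for n using mx_mono[OF predc_all y] c_def by simp
  show ?thesis
  proof (cases "\<exists>j\<in>RS. y j < c")
    case True
    then obtain j where j: "j \<in> RS" "y j < c" by blast
    obtain t where t: "\<forall>r\<in>RS. (j, r) \<in> E ^^ t" using prim[OF j(1)] by blast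
    have j0: "(F ^^ 0) y j < c" using j(2) by simp
    have "(F ^^ t) y r < c" if r: "r \<in> RS" for r
      using low_walk[OF y yc(1) j0 t[rule_format, OF r]] by simp
    hence "\<forall>r\<in>RS. (F ^^ t) y r < c" by blast
    hence pers: "\<forall>m\<ge>t. \<forall>i\<in>RS. (F ^^ m) y i < c"
    proof (intro allI impI)
      fix m assume "t \<le> m"
      then obtain k where "m = t + k" using le_Suc_ex by blast
      thus "\<forall>i\<in>RS. (F ^^ m) y i < c" using persist_low[OF y yc(1) \<open>\<forall>r\<in>RS. (F ^^ t) y r < c\<close>] by blast
    qed
    have "\<forall>m\<ge>t. \<forall>v<p. \<forall>l. (j, v) \<in> E ^^ l \<longrightarrow> (F ^^ (m + l)) y v < c"
    proof (intro allI impI)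
      fix m v :: nat and l assume "t \<le> m" "v < p" "(j, v) \<in> E ^^ l"
      have "(F ^^ m) y j < c" using pers \<open>t \<le> m\<close> j(1) by blast
      thus "(F ^^ (m + l)) y v < c" using low_walk[OF y yc(1) _ \<open>(j, v) \<in> E ^^ l\<close>] by blast
    qed
    then have "\<exists>N. \<forall>v<p. (F ^^ N) y v < c" by (rule all_time[where Q="\<lambda>N v. (F ^^ N) y v < c", OF j(1)])
    then obtain N where N: "\<forall>v<p. (F ^^ N) y v < c" by blast
    hence "Max ((F ^^ N) y ` {..<p}) < c" using fin_p by simp
    hence "spread ((F ^^ N) y) < spread y" using mn[of N] unfolding spread_def c_def c'_def by linarith
    thus ?thesis by blast
  next
    case False
    have Rc: "\<forall>j\<in>RS. y j = c"
    proof
      fix j assume j: "j \<in> RS"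
      hence "j < p" using RS_sub by auto
      hence "y j \<le> c" using yc(1) by blast
      thus "y j = c" using False j by (meson antisym not_less)
    qed
    obtain i j where ij: "i < p" "j < p" "y i \<noteq> y j" using nc by blast
    have "c' \<le> y i" "y i \<le> c" "c' \<le> y j" "y j \<le> c" using yc ij by blast+
    have "c' < c"
    proof (rule ccontr)
      assume "\<not> c' < c"
      hence "y i = y j" using \<open>c' \<le> y i\<close> \<open>y i \<le> c\<close> \<open>c' \<le> y j\<close> \<open>y j \<le> c\<close> by linarith
      thus False using ij(3) by blast
    qed
    obtain s where s: "s \<in> RS" using RS_ne by blast
    have "\<forall>r\<in>RS. c' < (F ^^ 0) y r" using Rc \<open>c' < c\<close> by simp
    hence pers: "\<forall>m\<ge>0. \<forall>i\<in>RS. c' < (F ^^ m) y i"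
    proof (intro allI impI)
      fix m :: nat
      show "\<forall>i\<in>RS. c' < (F ^^ m) y i" using persist_high[OF y yc(2) \<open>\<forall>r\<in>RS. c' < (F ^^ 0) y r\<close>, of m] by simp
    qed
    have "\<forall>m\<ge>0. \<forall>v<p. \<forall>l. (s, v) \<in> E ^^ l \<longrightarrow> c' < (F ^^ (m + l)) y v"
    proof (intro allI impI)
      fix m v :: nat and l assume "0 \<le> m" "v < p" "(s, v) \<in> E ^^ l"
      have "c' < (F ^^ m) y s" using pers s by blast
      thus "c' < (F ^^ (m + l)) y v" using high_walk[OF y yc(2) _ \<open>(s, v) \<in> E ^^ l\<close>] by blast
    qed
    then have "\<exists>N. \<forall>v<p. c' < (F ^^ N) y v" by (rule all_time[where Q="\<lambda>N v. c' < (F ^^ N) y v", OF s])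
    then obtain N where N: "\<forall>v<p. c' < (F ^^ N) y v" by blast
    hence "c' < Min ((F ^^ N) y ` {..<p})" using fin_p by simp
    hence "spread ((F ^^ N) y) < spread y" using mx[of N] unfolding spread_def c_def c'_def by linarith
    thus ?thesis by blast
  qed
qed

end
end


lemma Max_tendsto:
  fixes f :: "'b \<Rightarrow> 'a \<Rightarrow> real"
  assumes "finite S" "S \<noteq> {}" "\<forall>i\<in>S. ((\<lambda>k. f k i) \<longlongrightarrow> g i) F"
  shows "((\<lambda>k. Max (f k ` S)) \<longlongrightarrow> Max (g ` S)) F"
  using assms
proof (induction S rule: finite_ne_induct)
  case (singleton x) thus ?case by simp
next
  case (insert x S)
  have "((\<lambda>k. max (f k x) (Max (f k ` S))) \<longlongrightarrow> max (g x) (Max (g ` S))) F"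
    using insert by (intro tendsto_max) auto
  thus ?case using insert by simp
qed

lemma Min_tendsto:
  fixes f :: "'b \<Rightarrow> 'a \<Rightarrow> real"
  assumes "finite S" "S \<noteq> {}" "\<forall>i\<in>S. ((\<lambda>k. f k i) \<longlongrightarrow> g i) F"
  shows "((\<lambda>k. Min (f k ` S)) \<longlongrightarrow> Min (g ` S)) F"
  using assms
proof (induction S rule: finite_ne_induct)
  case (singleton x) thus ?case by simp
next
  case (insert x S)
  have "((\<lambda>k. min (f k x) (Min (f k ` S))) \<longlongrightarrow> min (g x) (Min (g ` S))) F"
    using insert by (intro tendsto_min) auto
  thus ?case using insert by simp
qed

lemma subseq_conv:
  fixes z :: "nat \<Rightarrow> nat \<Rightarrow> real"
  shows "(\<forall>k. \<forall>i<n. z k i \<in> {a..b}) \<Longrightarrow> \<exists>r. strict_mono r \<and> (\<forall>i<n. convergent (\<lambda>k. z (r k) i))"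
proof (induction n)
  case 0
  have "strict_mono (id :: nat \<Rightarrow> nat)" by (simp add: strict_mono_def)
  thus ?case by blast
next
  case (Suc n)
  then obtain r where r: "strict_mono r" "\<forall>i<n. convergent (\<lambda>k. z (r k) i)" by auto
  have "bounded (range (\<lambda>k. z (r k) n))"
    using Suc.prems by (intro bounded_subset[OF bounded_closed_interval[of a b]]) auto
  then obtain l r' where r': "strict_mono r'" "((\<lambda>k. z (r k) n) \<circ> r') \<longlonglongrightarrow> l"
    using bounded_imp_convergent_subsequence by blast
  have "strict_mono (r \<circ> r')" using r(1) r'(1) by (rule strict_mono_o)
  moreover have "convergent (\<lambda>k. z ((r \<circ> r') k) i)" if "i < Suc n" for i
  proof (cases "i = n")
    case True thus ?thesis using r'(2) unfolding convergent_def by (auto simp: o_def)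
  next
    case False
    hence "i < n" using that by simp
    hence "(\<lambda>k. z (r k) i) \<longlonglongrightarrow> lim (\<lambda>k. z (r k) i)" using r(2) convergent_LIMSEQ_iff by blast
    from LIMSEQ_subseq_LIMSEQ[OF this r'(1)] show ?thesis unfolding convergent_def by (auto simp: o_def)
  qed
  ultimately show ?case by blast
qed

context setting begin

lemma arg_tendsto:
  assumes "\<forall>i<p. (\<lambda>k. z k i) \<longlonglongrightarrow> y i" "i < p"
  shows "(\<lambda>k. arg (z k) i) \<longlonglongrightarrow> arg y i"
  unfolding tendsto_fun_iff
proof
  fix j
  show "(\<lambda>k. arg (z k) i j) \<longlonglongrightarrow> arg y i j"
  proof (cases "j < d i")
    case True
    hence "\<alpha> i j < p" using \<alpha> assms(2) by blast
    thus ?thesis using assms(1) True by (simp add: arg_def)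
  next
    case False thus ?thesis by (simp add: arg_def)
  qed
qed

lemma F_tendsto:
  assumes z: "\<forall>k. z k \<in> cube I p" and y: "y \<in> cube I p"
    and c: "\<forall>i<p. (\<lambda>k. z k i) \<longlonglongrightarrow> y i"
  shows "\<forall>i<p. (\<lambda>k. F (z k) i) \<longlonglongrightarrow> F y i"
proof (intro allI impI)
  fix i assume i: "i < p"
  have Mc: "continuous_on (cube I (d i)) (M i)" using M_cont i by blast
  have "\<forall>k. arg (z k) i \<in> cube I (d i)" by (intro allI) (rule arg_cube[OF z[rule_format] i])
  hence ev: "\<forall>\<^sub>F k in sequentially. arg (z k) i \<in> cube I (d i)" by (rule always_eventually)
  have "(\<lambda>k. M i (arg (z k) i)) \<longlonglongrightarrow> M i (arg y i)"
    by (rule continuous_on_tendsto_compose[OF Mc arg_tendsto[OF c i] arg_cube[OF y i] ev])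
  thus "(\<lambda>k. F (z k) i) \<longlonglongrightarrow> F y i" unfolding F_app[OF i] .
qed

lemma Fn_tendsto:
  assumes z: "\<forall>k. z k \<in> cube I p" and y: "y \<in> cube I p"
    and c: "\<forall>i<p. (\<lambda>k. z k i) \<longlonglongrightarrow> y i"
  shows "\<forall>i<p. (\<lambda>k. (F ^^ m) (z k) i) \<longlonglongrightarrow> (F ^^ m) y i"
proof (induction m)
  case 0 thus ?case using c by simp
next
  case (Suc m)
  have "\<forall>i<p. (\<lambda>k. F ((F ^^ m) (z k)) i) \<longlonglongrightarrow> F ((F ^^ m) y) i"
  proof (rule F_tendsto)
    show "\<forall>k. (F ^^ m) (z k) \<in> cube I p" by (intro allI) (rule Fn_cube[OF z[rule_format]])
    show "(F ^^ m) y \<in> cube I p" by (rule Fn_cube[OF y])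
    show "\<forall>i<p. (\<lambda>k. (F ^^ m) (z k) i) \<longlonglongrightarrow> (F ^^ m) y i" using Suc.IH .
  qed
  thus ?case by simp
qed

lemma spread_tendsto:
  assumes c: "\<forall>i<p. (\<lambda>k. z k i) \<longlonglongrightarrow> y i"
  shows "(\<lambda>k. spread (z k)) \<longlonglongrightarrow> spread y"
  unfolding spread_def
  by (intro tendsto_diff Max_tendsto Min_tendsto fin_p) (use c in auto)

lemma spread_nonneg: "0 \<le> spread z"
proof -
  have "0 \<in> {..<p}" using p by simp
  hence "Min (z ` {..<p}) \<le> z 0" "z 0 \<le> Max (z ` {..<p})" by auto
  thus ?thesis unfolding spread_def by simp
qed

lemma spread_const: "\<not> (\<exists>i<p. \<exists>j<p. y i \<noteq> y j) \<Longrightarrow> spread y = 0"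
proof -
  assume h: "\<not> (\<exists>i<p. \<exists>j<p. y i \<noteq> y j)"
  have "0 \<in> {..<p}" using p by simp
  have "y ` {..<p} = {y 0}"
  proof
    have h': "\<forall>i<p. y i = y 0" using h \<open>0 \<in> {..<p}\<close> by blast
    show "y ` {..<p} \<subseteq> {y 0}"
    proof
      fix v assume "v \<in> y ` {..<p}"
      then obtain i where "i < p" "v = y i" by blast
      thus "v \<in> {y 0}" using h' by (metis singletonI)
    qed
    show "{y 0} \<subseteq> y ` {..<p}" using \<open>0 \<in> {..<p}\<close> by blast
  qed
  thus ?thesis unfolding spread_def by simp
qed

end

context setting begin

lemma spread_lim:
  assumes erg: "ergodic_graph RS ER" and x: "x \<in> cube I p"
  shows "(\<lambda>n. spread ((F ^^ n) x)) \<longlonglongrightarrow> 0"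
proof -
  define s where "s n = spread ((F ^^ n) x)" for n
  have dec: "decseq s"
  proof (rule decseq_SucI)
    fix n
    have "Min ((F ^^ n) x ` {..<p}) \<le> Min ((F ^^ 1) ((F ^^ n) x) ` {..<p})"
      by (rule mn_mono[OF predc_all Fn_cube[OF x]])
    moreover have "Max ((F ^^ 1) ((F ^^ n) x) ` {..<p}) \<le> Max ((F ^^ n) x ` {..<p})"
      by (rule mx_mono[OF predc_all Fn_cube[OF x]])
    ultimately show "s (Suc n) \<le> s n" unfolding s_def spread_def by simp
  qed
  have bdd: "bdd_below (range s)" unfolding s_def using spread_nonneg by (auto simp: bdd_below_def)
  define L where "L = (INF n. s n)"
  have sL: "s \<longlonglongrightarrow> L" unfolding L_def by (rule LIMSEQ_decseq_INF[OF bdd dec])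
  have Lle: "L \<le> s n" for n using decseq_ge[OF dec sL] .
  define a where "a = Min (x ` {..<p})"
  define b where "b = Max (x ` {..<p})"
  have xa: "\<forall>i\<in>{..<p}. a \<le> x i" and xb: "\<forall>i\<in>{..<p}. x i \<le> b" using fin_p by (auto simp: a_def b_def)
  have bnd: "\<forall>k. \<forall>i<p. (F ^^ k) x i \<in> {a..b}"
  proof (intro allI impI)
    fix k i assume "i < p"
    hence "a \<le> (F ^^ k) x i" "(F ^^ k) x i \<le> b"
      using lo_prop[OF predc_all x xa] up_prop[OF predc_all x xb] by auto
    thus "(F ^^ k) x i \<in> {a..b}" by simp
  qed
  obtain r where r: "strict_mono r" "\<forall>i<p. convergent (\<lambda>k. (F ^^ (r k)) x i)"
    using subseq_conv[of p "\<lambda>k. (F ^^ k) x" a b] bnd by blast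
  define y where "y = restrict (\<lambda>i. lim (\<lambda>k. (F ^^ (r k)) x i)) {..<p}"
  have yc: "\<forall>i<p. (\<lambda>k. (F ^^ (r k)) x i) \<longlonglongrightarrow> y i"
    using r(2) unfolding y_def convergent_LIMSEQ_iff by simp
  have abI: "a \<in> I" "b \<in> I"
  proof -
    have sub: "x ` {..<p} \<subseteq> I"
    proof
      fix v assume "v \<in> x ` {..<p}"
      then obtain i where "i \<in> {..<p}" "v = x i" by blast
      thus "v \<in> I" using PiE_mem[OF x] by metis
    qed
    show "a \<in> I" unfolding a_def using Min_in[of "x ` {..<p}"] fin_p sub by blast
    show "b \<in> I" unfolding b_def using Max_in[of "x ` {..<p}"] fin_p sub by blast
  qed
  have ycube: "y \<in> cube I p"
  proof (rule PiE_I)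
    fix i assume "i \<in> {..<p}"
    hence i: "i < p" by simp
    have "a \<le> y i" using LIMSEQ_le_const[OF yc[rule_format, OF i]] bnd i by auto
    moreover have "y i \<le> b" using LIMSEQ_le_const2[OF yc[rule_format, OF i]] bnd i by auto
    ultimately show "y i \<in> I" using abI I_iv by blast
  next
    fix i assume "i \<notin> {..<p}" thus "y i = undefined" unfolding y_def by simp
  qed
  have zc: "\<forall>k. (F ^^ (r k)) x \<in> cube I p" by (intro allI) (rule Fn_cube[OF x])
  have "(\<lambda>k. s (r k)) \<longlonglongrightarrow> spread y" unfolding s_def by (rule spread_tendsto[OF yc])
  moreover have "(\<lambda>k. s (r k)) \<longlonglongrightarrow> L" using LIMSEQ_subseq_LIMSEQ[OF sL r(1)] by (simp add: o_def)
  ultimately have yL: "spread y = L" using LIMSEQ_unique by blast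
  have "L = 0"
  proof (cases "\<exists>i<p. \<exists>j<p. y i \<noteq> y j")
    case True
    obtain m where m: "spread ((F ^^ m) y) < spread y" using spread_dec[OF erg ycube True] by blast
    have "\<forall>i<p. (\<lambda>k. (F ^^ m) ((F ^^ (r k)) x) i) \<longlonglongrightarrow> (F ^^ m) y i"
      by (rule Fn_tendsto[OF zc ycube yc])
    hence lim: "(\<lambda>k. spread ((F ^^ m) ((F ^^ (r k)) x))) \<longlonglongrightarrow> spread ((F ^^ m) y)"
      by (rule spread_tendsto)
    have "spread ((F ^^ m) ((F ^^ (r k)) x)) = s (m + r k)" for k
      unfolding s_def by (simp add: funpow_add)
    hence "L \<le> spread ((F ^^ m) ((F ^^ (r k)) x))" for k using Lle by simp
    hence "L \<le> spread ((F ^^ m) y)" using LIMSEQ_le_const[OF lim] by blast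
    thus ?thesis using m yL by simp
  next
    case False
    have "spread y = 0" by (rule spread_const[OF False])
    thus ?thesis using yL by simp
  qed
  thus ?thesis using sL unfolding s_def by simp
qed

lemma backward:
  assumes erg: "ergodic_graph RS ER"
  shows "\<exists>K. invariant_mean I p F K \<and>
            (\<forall>K'. invariant_mean I p F K' \<longrightarrow> (\<forall>x\<in>cube I p. K' x = K x))"
proof (intro exI conjI allI impI ballI)
  show "invariant_mean I p F (kmin {..<p})" by (rule kmin_mean[OF predc_all])
  fix K' x assume K': "invariant_mean I p F K'" and x: "x \<in> cube I p"
  have KK: "is_mean I p K' \<and> (\<forall>y\<in>cube I p. K' (F y) = K' y)"
    using K' unfolding invariant_mean_def .
  have Kinv: "\<forall>y\<in>cube I p. K' (F y) = K' y" using KK by (rule conjunct2)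
  have Km: "is_mean I p K'" using KK by (rule conjunct1)
  have Kn: "K' ((F ^^ n) x) = K' x" for n
  proof (induction n)
    case (Suc n)
    have "K' (F ((F ^^ n) x)) = K' ((F ^^ n) x)" using Kinv[rule_format, OF Fn_cube[OF x, of n]] .
    thus ?case using Suc by simp
  qed simp
  have bnds: "Min ((F ^^ n) x ` {..<p}) \<le> K' x \<and> K' x \<le> Max ((F ^^ n) x ` {..<p})" for n
  proof -
    have "\<forall>y\<in>cube I p. Min (y ` {..<p}) \<le> K' y \<and> K' y \<le> Max (y ` {..<p})"
      using Km unfolding is_mean_def .
    from this[rule_format, OF Fn_cube[OF x, of n]] show ?thesis unfolding Kn[of n] .
  qed
  have mnl: "(\<lambda>n. Min ((F ^^ n) x ` {..<p})) \<longlonglongrightarrow> kmin {..<p} x" by (rule kmin_lim[OF predc_all x])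
  have "(\<lambda>n. Min ((F ^^ n) x ` {..<p}) + spread ((F ^^ n) x)) \<longlonglongrightarrow> kmin {..<p} x + 0"
    by (rule tendsto_add[OF mnl spread_lim[OF erg x]])
  hence mxl: "(\<lambda>n. Max ((F ^^ n) x ` {..<p})) \<longlonglongrightarrow> kmin {..<p} x" unfolding spread_def by simp
  have "K' x \<le> kmin {..<p} x" using LIMSEQ_le_const[OF mxl] bnds by blast
  moreover have "kmin {..<p} x \<le> K' x" using LIMSEQ_le_const2[OF mnl] bnds by blast
  ultimately show "K' x = kmin {..<p} x" by simp
qed

lemma main:
  "(\<exists>K. invariant_mean I p F K \<and>
            (\<forall>K'. invariant_mean I p F K' \<longrightarrow> (\<forall>x\<in>cube I p. K' x = K x)))
         \<longleftrightarrow> ergodic_graph RS ER"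
  using forward backward by blast

end

theorem theorem3p3:
  fixes I :: "real set" and p :: nat and d :: "nat \<Rightarrow> nat"
    and \<alpha> :: "nat \<Rightarrow> nat \<Rightarrow> nat" and M :: "nat \<Rightarrow> (nat \<Rightarrow> real) \<Rightarrow> real"
  assumes I: "is_interval I" and I_nondeg: "\<exists>a\<in>I. \<exists>b\<in>I. a < b"
    and p: "p \<ge> 1"
    and d: "\<forall>i<p. d i \<ge> 1"
    and \<alpha>: "\<forall>i<p. \<forall>j<d i. \<alpha> i j < p"
    and M_strict: "\<forall>i<p. strict_mean I (d i) (M i)"
    and M_cont: "\<forall>i<p. continuous_on (cube I (d i)) (M i)"
  shows "(\<exists>K. invariant_mean I p (M_alpha p d \<alpha> M) K \<and>
            (\<forall>K'. invariant_mean I p (M_alpha p d \<alpha> M) K' \<longrightarrow>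
                    (\<forall>x\<in>cube I p. K' x = K x)))
         \<longleftrightarrow> ergodic_graph (root_set {..<p} (inc_edges p d \<alpha>))
                (Restr (inc_edges p d \<alpha>) (root_set {..<p} (inc_edges p d \<alpha>)))"
proof -
  interpret setting I p d \<alpha> M using assms by (rule setting.intro)
  show ?thesis by (rule main)
qed

end
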